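(* Let $H=E+D$ and $K=E'+D'$ be closed additive subgroups of $\mathbb{R}^{n}$ (with decompositions as in the context) and let $f:H\to K$ be a homomorphism of closed additive groups. Then (i) $\mathrm{Ker}(f)$ is a closed additive subgroup of $\mathbb{R}^n$, and (ii) $\mathrm{Im}(f)$ is a closed additive subgroup of $\mathbb{R}^n$.
   Context: Every closed additive subgroup $H$ of $\mathbb{R}^n$ can be written $H=E+D$ with $E$ a vector subspace and $D$ a discrete additive subgroup with $E\cap\mathrm{vect}(D)=\{0\}$ ($\mathrm{vect}$ = real span); such decompositions $H=E+D$, $K=E'+D'$ are fixed. A map $f:H\to K$ is a homomorphism of closed additive groups if there are a linear map $f_1:E\to E'$ and a group homomorphism $f_2:D\to D'$ with $f(\lambda x+py)=\lambda f_1(x)+pf_2(y)$ for all $\lambda\in\mathbb{R}$, $p\in\mathbb{Z}$, $x\in E$, $y\in D$. *)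

theory Defs
  imports "HOL-Analysis.Analysis"
begin

definition add_subgroup :: "'a::real_vector set \<Rightarrow> bool" where
  "add_subgroup G \<longleftrightarrow> 0 \<in> G \<and> (\<forall>x\<in>G. \<forall>y\<in>G. x + y \<in> G) \<and> (\<forall>x\<in>G. - x \<in> G)"

definition closed_add_subgroup :: "(real^'n) set \<Rightarrow> bool" where
  "closed_add_subgroup G \<longleftrightarrow> add_subgroup G \<and> closed G"

definition discrete_add_subgroup :: "(real^'n) set \<Rightarrow> bool" where
  "discrete_add_subgroup D \<longleftrightarrow> add_subgroup D \<and> discrete D"

definition csg_decomposition :: "(real^'n) set \<Rightarrow> (real^'n) set \<Rightarrow> (real^'n) set \<Rightarrow> bool" where
  "csg_decomposition H E D \<longleftrightarrow>
     subspace E \<and> discrete_add_subgroup D \<and> E \<inter> span D = {0} \<and>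
     H = {x + y | x y. x \<in> E \<and> y \<in> D}"

text \<open>f : H \<rightarrow> K is a homomorphism of closed additive groups w.r.t. fixed decompositions
  H = E + D, K = E' + D'.\<close>
definition csg_hom ::
  "(real^'n) set \<Rightarrow> (real^'n) set \<Rightarrow> (real^'n) set \<Rightarrow> (real^'n) set \<Rightarrow>
   (real^'n \<Rightarrow> real^'n) \<Rightarrow> bool" where
  "csg_hom E D E' D' f \<longleftrightarrow>
     (\<exists>f1 f2.
        f1 ` E \<subseteq> E' \<and>
        (\<forall>x\<in>E. \<forall>y\<in>E. f1 (x + y) = f1 x + f1 y) \<and>
        (\<forall>c. \<forall>x\<in>E. f1 (c *\<^sub>R x) = c *\<^sub>R f1 x) \<and>
        f2 ` D \<subseteq> D' \<and>
        (\<forall>x\<in>D. \<forall>y\<in>D. f2 (x + y) = f2 x + f2 y) \<and>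
        (\<forall>(lam::real) (p::int). \<forall>x\<in>E. \<forall>y\<in>D.
           f (lam *\<^sub>R x + of_int p *\<^sub>R y) = lam *\<^sub>R f1 x + of_int p *\<^sub>R f2 y))"

end

theory Submission
  imports Defs
begin

lemma proj_exists:
  fixes E :: "'a::euclidean_space set"
  assumes "subspace E"
  obtains p :: "'a \<Rightarrow> 'a" where "linear p" "\<And>e. e \<in> E \<Longrightarrow> p e = 0" "\<And>v. p v = 0 \<Longrightarrow> v \<in> E"
proof -
  obtain B where "B \<subseteq> E"
    and ortho: "pairwise orthogonal B" "\<And>x. x \<in> B \<Longrightarrow> norm x = 1"
    and "independent B" "card B = dim E" "span B = E"
    using orthonormal_basis_subspace [OF assms] by metis
  then have "finite B"
    by (simp add: indep_card_eq_dim_span)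
  have *: "\<forall>x\<in>B. \<forall>y\<in>B. x \<bullet> y = (if x=y then 1 else 0)"
    using ortho norm_eq_1 by (auto simp: orthogonal_def pairwise_def)
  define u where "u v = (\<Sum>b\<in>B. (v \<bullet> b) *\<^sub>R b)" for v
  have uE: "u v \<in> E" for v
    unfolding u_def by (metis (no_types, lifting) \<open>span B = E\<close> assms subspace_sum span_base span_mul)
  have uperp: "v - u v \<in> E\<^sup>\<bottom>" for v
      unfolding orthogonal_comp_def orthogonal_def mem_Collect_eq
    proof 
      fix y
      assume "y \<in> E"
      with \<open>span B = E\<close> span_finite [OF \<open>finite B\<close>]
      obtain c where c: "y = (\<Sum>b\<in>B. c b *\<^sub>R b)"
        by auto
      have "b \<bullet> (v - u v) = 0" if "b \<in> B" for b
        using that \<open>finite B\<close> unfolding u_def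
        by (simp add: * algebra_simps inner_sum_right if_distrib [of "(*)v" for v] inner_commute cong: if_cong)
      then show "y \<bullet> (v - u v) = 0"
        by (simp add: c inner_sum_left)
    qed
  have lin: "linear (\<lambda>v. v - u v)"
    unfolding u_def
    unfolding linear_iff
    by (simp add: inner_add_left scaleR_add_left sum.distrib scaleR_sum_right algebra_simps)
  show ?thesis
  proof (rule that[of "\<lambda>v. v - u v"])
    show "linear (\<lambda>v. v - u v)" by (fact lin)
  next
    fix e assume "e \<in> E"
    then have "e - u e \<in> E" using uE assms subspace_diff by blast
    then show "e - u e = 0" using uperp[of e] orthogonal_Int_0[OF assms] by blast
  next
    fix v assume "v - u v = 0" then show "v \<in> E" using uE[of v] by simp
  qed
qed

lemma closed_sum_sd:
  fixes E D :: "'a::euclidean_space set"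
  assumes E: "subspace E" and D0: "0 \<in> D" and Ddiff: "\<And>x y. x \<in> D \<Longrightarrow> y \<in> D \<Longrightarrow> x - y \<in> D"
    and disc: "discrete D" and int: "E \<inter> span D = {0}"
  shows "closed {x + y | x y. x \<in> E \<and> y \<in> D}"
proof -
  obtain p :: "'a \<Rightarrow> 'a" where p: "linear p" "\<And>e. e \<in> E \<Longrightarrow> p e = 0" "\<And>v. p v = 0 \<Longrightarrow> v \<in> E"
    using proj_exists[OF E] by (smt (verit))
  have "inj_on p (span D)"
  proof (rule inj_onI)
    fix x y assume xy: "x \<in> span D" "y \<in> span D" "p x = p y"
    then have "p (x - y) = 0" using linear_diff[OF p(1)] by simp
    then have "x - y \<in> E" by (rule p(3))
    moreover have "x - y \<in> span D" using xy span_diff by blast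
    ultimately have "x - y \<in> E \<inter> span D" by (rule IntI)
    then have "x - y \<in> {0}" by (simp only: int)
    then show "x = y" by simp
  qed
  then obtain g :: "'a \<Rightarrow> 'a" where g: "linear g" "\<forall>v\<in>span D. g (p v) = v"
    using linear_exists_left_inverse_on[OF p(1) subspace_span] by blast
  define h where "h = g \<circ> p"
  have hlin: "linear h" unfolding h_def using linear_compose[OF p(1) g(1)] .
  have hed: "h (e + d) = d" if "e \<in> E" "d \<in> D" for e d
  proof -
    have "p (e + d) = p d" using linear_add[OF p(1)] p(2)[OF that(1)] by simp
    then show ?thesis unfolding h_def using g(2) that(2) span_base by fastforce
  qed
  have "0 isolated_in D" using discreteD[OF disc D0] .
  then obtain r where r0: "r > 0" and r1: "\<forall>y\<in>D. dist 0 y < r \<longrightarrow> y = 0"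
    unfolding isolated_in_dist_Ex_iff by auto
  have r: "r > 0" "\<And>y. y \<in> D \<Longrightarrow> dist 0 y < r \<Longrightarrow> y = 0" using r0 r1 by auto
  show ?thesis
    unfolding closed_sequential_limits
  proof (intro allI impI, elim conjE)
    fix z l assume zin: "\<forall>n. z n \<in> {x + y |x y. x \<in> E \<and> y \<in> D}" and lim: "z \<longlonglongrightarrow> l"
    then have "\<forall>n. \<exists>a b. z n = a + b \<and> a \<in> E \<and> b \<in> D" by blast
    then obtain e d where ed: "\<And>n. e n \<in> E" "\<And>n. d n \<in> D" "\<And>n. z n = e n + d n"
      by metis
    have "(\<lambda>n. h (z n)) \<longlonglongrightarrow> h l"
      using isCont_tendsto_compose[OF linear_continuous_at[OF hlin[unfolded linear_conv_bounded_linear]] lim] .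
    then have "(\<lambda>n. d n) \<longlonglongrightarrow> h l" using hed ed by simp
    then have "Cauchy d" by (rule LIMSEQ_imp_Cauchy)
    then obtain M where M: "\<And>m n. m \<ge> M \<Longrightarrow> n \<ge> M \<Longrightarrow> dist (d m) (d n) < r"
      unfolding Cauchy_def using r(1) by blast
    have dM: "d n = d M" if "n \<ge> M" for n
    proof -
      have "dist 0 (d n - d M) < r" using M[OF that order_refl] by (simp add: dist_norm norm_minus_commute)
      then have "d n - d M = 0" using r(2)[OF Ddiff[OF ed(2) ed(2)]] by blast
      then show ?thesis by simp
    qed
    have tl: "(\<lambda>n. z n - d M) \<longlonglongrightarrow> l - d M" using lim by (intro tendsto_intros)
    have "eventually (\<lambda>n. z n - d M \<in> E) sequentially"
    proof (rule eventually_sequentiallyI[of M])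
      fix n assume "M \<le> n"
      then have "z n - d M = e n" using ed(3)[of n] dM[of n] by simp
      then show "z n - d M \<in> E" using ed(1)[of n] by simp
    qed
    then have "l - d M \<in> E"
      by (rule Lim_in_closed_set[OF closed_subspace[OF E] _ trivial_limit_sequentially tl])
    then show "l \<in> {x + y |x y. x \<in> E \<and> y \<in> D}"
    proof -
      have "l = (l - d M) + d M" by simp
      then show ?thesis using ed(2)[of M] \<open>l - d M \<in> E\<close> by blast
    qed
  qed
qed


lemma sum_add_subgroup:
  fixes E D :: "(real^'n) set"
  assumes E: "subspace E" and D: "add_subgroup D"
  shows "add_subgroup {x + y | x y. x \<in> E \<and> y \<in> D}"
proof -
  have D0: "0 \<in> D" and Dadd: "\<And>x y. x \<in> D \<Longrightarrow> y \<in> D \<Longrightarrow> x + y \<in> D"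
    and Dneg: "\<And>x. x \<in> D \<Longrightarrow> - x \<in> D"
    using D unfolding add_subgroup_def by auto
  show ?thesis
  unfolding add_subgroup_def
  proof (intro conjI ballI)
    have "(0::real^'n) = 0 + 0" by simp
    then show "0 \<in> {x + y | x y. x \<in> E \<and> y \<in> D}"
      using subspace_0[OF E] D0 by blast
  next
    fix a b assume "a \<in> {x + y | x y. x \<in> E \<and> y \<in> D}" "b \<in> {x + y | x y. x \<in> E \<and> y \<in> D}"
    then obtain x y x' y' where h: "a = x + y" "x \<in> E" "y \<in> D" "b = x' + y'" "x' \<in> E" "y' \<in> D" by blast
    have "a + b = (x + x') + (y + y')" using h by (simp add: algebra_simps)
    moreover have "x + x' \<in> E" using subspace_add[OF E h(2) h(5)] .
    moreover have "y + y' \<in> D" using Dadd[OF h(3) h(6)] .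
    ultimately show "a + b \<in> {x + y | x y. x \<in> E \<and> y \<in> D}" by blast
  next
    fix a assume "a \<in> {x + y | x y. x \<in> E \<and> y \<in> D}"
    then obtain x y where h: "a = x + y" "x \<in> E" "y \<in> D" by blast
    have "- a = (- x) + (- y)" using h by simp
    moreover have "- x \<in> E" using subspace_neg[OF E h(2)] .
    moreover have "- y \<in> D" using Dneg[OF h(3)] .
    ultimately show "- a \<in> {x + y | x y. x \<in> E \<and> y \<in> D}" by blast
  qed
qed

lemma sum_closed_add_subgroup:
  fixes E D :: "(real^'n) set"
  assumes E: "subspace E" and D: "add_subgroup D" and disc: "discrete D" and int: "E \<inter> span D = {0}"
  shows "closed_add_subgroup {x + y | x y. x \<in> E \<and> y \<in> D}"
  unfolding closed_add_subgroup_def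
proof
  show "add_subgroup {x + y | x y. x \<in> E \<and> y \<in> D}" by (rule sum_add_subgroup[OF E D])
  have Ddiff: "x - y \<in> D" if "x \<in> D" "y \<in> D" for x y
  proof -
    have "x + (- y) \<in> D" using D that unfolding add_subgroup_def by blast
    then show ?thesis by simp
  qed
  show "closed {x + y | x y. x \<in> E \<and> y \<in> D}"
    by (rule closed_sum_sd[OF E _ Ddiff disc int]) (use D in \<open>simp add: add_subgroup_def\<close>)
qed

theorem corollary4p2:
  fixes H K E D E' D' :: "(real^'n) set" and f :: "real^'n \<Rightarrow> real^'n"
  assumes "csg_decomposition H E D"
    and "csg_decomposition K E' D'"
    and "csg_hom E D E' D' f"
  shows "closed_add_subgroup {x \<in> H. f x = 0} \<and> closed_add_subgroup (f ` H)"
proof -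
  note d1 = assms(1)[unfolded csg_decomposition_def discrete_add_subgroup_def]
  note d2 = assms(2)[unfolded csg_decomposition_def discrete_add_subgroup_def]
  have E: "subspace E" using d1 by (rule conjunct1)
  have D: "add_subgroup D" using d1[THEN conjunct2, THEN conjunct1] by (rule conjunct1)
  have Ddisc: "discrete D" using d1[THEN conjunct2, THEN conjunct1] by (rule conjunct2)
  have int: "E \<inter> span D = {0}" using d1[THEN conjunct2, THEN conjunct2] by (rule conjunct1)
  have H: "H = {x + y | x y. x \<in> E \<and> y \<in> D}" using d1[THEN conjunct2, THEN conjunct2] by (rule conjunct2)
  have E': "subspace E'" using d2 by (rule conjunct1)
  have D'disc: "discrete D'" using d2[THEN conjunct2, THEN conjunct1] by (rule conjunct2)
  have int': "E' \<inter> span D' = {0}" using d2[THEN conjunct2, THEN conjunct2] by (rule conjunct1)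
  obtain f1 f2 where f1E: "f1 ` E \<subseteq> E'"
    and f1add: "\<forall>x\<in>E. \<forall>y\<in>E. f1 (x + y) = f1 x + f1 y"
    and f1scale: "\<forall>c. \<forall>x\<in>E. f1 (c *\<^sub>R x) = c *\<^sub>R f1 x"
    and f2D: "f2 ` D \<subseteq> D'"
    and f2add: "\<forall>x\<in>D. \<forall>y\<in>D. f2 (x + y) = f2 x + f2 y"
    and fdef: "\<forall>(lam::real) (p::int). \<forall>x\<in>E. \<forall>y\<in>D.
           f (lam *\<^sub>R x + of_int p *\<^sub>R y) = lam *\<^sub>R f1 x + of_int p *\<^sub>R f2 y"
    using assms(3) unfolding csg_hom_def by (elim exE conjE) (rule that)
  have fed: "f (x + y) = f1 x + f2 y" if "x \<in> E" "y \<in> D" for x y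
    using fdef that by (metis of_int_1 scaleR_one)
  have E0: "0 \<in> E" using subspace_0[OF E] .
  have D0: "0 \<in> D" using D unfolding add_subgroup_def by blast
  have Dneg: "- y \<in> D" if "y \<in> D" for y using D that unfolding add_subgroup_def by blast
  have Dadd: "x + y \<in> D" if "x \<in> D" "y \<in> D" for x y using D that unfolding add_subgroup_def by blast
  have f10: "f1 0 = 0" using f1scale E0 by (metis scaleR_zero_left)
  have f20: "f2 0 = 0"
  proof -
    have "f2 (0 + 0) = f2 0 + f2 0" using f2add D0 by blast
    then show ?thesis by simp
  qed
  have f2neg: "f2 (- y) = - f2 y" if "y \<in> D" for y
  proof -
    have "f2 (y + - y) = f2 y + f2 (- y)" using f2add that Dneg by blast
    then have "f2 y + f2 (- y) = 0" using f20 by simp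
    then show ?thesis by (simp add: eq_neg_iff_add_eq_0 add.commute)
  qed
  define E0s where "E0s = {x \<in> E. f1 x = 0}"
  define D0s where "D0s = {y \<in> D. f2 y = 0}"
  have kerEq: "{x \<in> H. f x = 0} = {x + y | x y. x \<in> E0s \<and> y \<in> D0s}"
  proof (rule set_eqI, rule iffI)
    fix z assume "z \<in> {x \<in> H. f x = 0}"
    then obtain x y where xy: "z = x + y" "x \<in> E" "y \<in> D" "f z = 0" using H by blast
    then have s: "f1 x + f2 y = 0" using fed by simp
    have "f2 y \<in> span D'" using f2D xy(3) span_base by blast
    then have "- f2 y \<in> span D'" by (rule span_neg)
    moreover have "f1 x = - f2 y" using s by (simp add: eq_neg_iff_add_eq_0)
    moreover have "f1 x \<in> E'" using f1E xy(2) by blast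
    ultimately have "f1 x \<in> E' \<inter> span D'" by simp
    then have "f1 x \<in> {0}" using int' by simp
    then have "f1 x = 0" by simp
    then have "f2 y = 0" using s by simp
    then show "z \<in> {x + y | x y. x \<in> E0s \<and> y \<in> D0s}"
      using xy \<open>f1 x = 0\<close> unfolding E0s_def D0s_def by blast
  next
    fix z assume "z \<in> {x + y | x y. x \<in> E0s \<and> y \<in> D0s}"
    then obtain x y where xy: "z = x + y" "x \<in> E" "y \<in> D" "f1 x = 0" "f2 y = 0"
      unfolding E0s_def D0s_def by blast
    then show "z \<in> {x \<in> H. f x = 0}" using fed H by auto
  qed
  have E0sub: "subspace E0s"
    unfolding subspace_def E0s_def
  proof (intro conjI ballI allI)
    show "0 \<in> {x \<in> E. f1 x = 0}" using E0 f10 by simp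
  next
    fix x y assume "x \<in> {x \<in> E. f1 x = 0}" "y \<in> {x \<in> E. f1 x = 0}"
    then show "x + y \<in> {x \<in> E. f1 x = 0}" using f1add subspace_add[OF E] by auto
  next
    fix c x assume "x \<in> {x \<in> E. f1 x = 0}"
    then show "c *\<^sub>R x \<in> {x \<in> E. f1 x = 0}" using f1scale subspace_mul[OF E] by auto
  qed
  have D0sub: "add_subgroup D0s"
    unfolding add_subgroup_def D0s_def
  proof (intro conjI ballI)
    show "0 \<in> {y \<in> D. f2 y = 0}" using D0 f20 by simp
  next
    fix x y assume "x \<in> {y \<in> D. f2 y = 0}" "y \<in> {y \<in> D. f2 y = 0}"
    then show "x + y \<in> {y \<in> D. f2 y = 0}" using f2add Dadd by auto
  next
    fix x assume "x \<in> {y \<in> D. f2 y = 0}"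
    then show "- x \<in> {y \<in> D. f2 y = 0}" using f2neg Dneg by auto
  qed
  have D0disc: "discrete D0s" using Ddisc unfolding D0s_def by (rule discrete_subset) auto
  have int0: "E0s \<inter> span D0s = {0}"
  proof -
    have "span D0s \<subseteq> span D" unfolding D0s_def by (rule span_mono) auto
    moreover have "0 \<in> E0s" using E0 f10 unfolding E0s_def by simp
    moreover have "E0s \<subseteq> E" unfolding E0s_def by auto
    ultimately have "E0s \<inter> span D0s \<subseteq> E \<inter> span D" by blast
    then have "E0s \<inter> span D0s \<subseteq> {0}" using int by simp
    moreover have "0 \<in> E0s \<inter> span D0s" using \<open>0 \<in> E0s\<close> span_zero by blast
    ultimately show ?thesis by blast
  qed
  have part1: "closed_add_subgroup {x \<in> H. f x = 0}"
    unfolding kerEq by (rule sum_closed_add_subgroup[OF E0sub D0sub D0disc int0])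
  have imEq: "f ` H = {x + y | x y. x \<in> f1 ` E \<and> y \<in> f2 ` D}"
  proof (rule set_eqI, rule iffI)
    fix z assume "z \<in> f ` H"
    then obtain x y where "z = f (x + y)" "x \<in> E" "y \<in> D" using H by blast
    then show "z \<in> {x + y | x y. x \<in> f1 ` E \<and> y \<in> f2 ` D}" using fed by blast
  next
    fix z assume "z \<in> {x + y | x y. x \<in> f1 ` E \<and> y \<in> f2 ` D}"
    then obtain x y where xy: "z = f1 x + f2 y" "x \<in> E" "y \<in> D" by blast
    then have "z = f (x + y)" using fed by simp
    moreover have "x + y \<in> H" using H xy by blast
    ultimately show "z \<in> f ` H" by blast
  qed
  have E1sub: "subspace (f1 ` E)"
    unfolding subspace_def
  proof (intro conjI ballI allI)
    show "0 \<in> f1 ` E" using E0 f10 by (metis image_eqI)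
  next
    fix a b assume "a \<in> f1 ` E" "b \<in> f1 ` E"
    then obtain x y where "a = f1 x" "b = f1 y" "x \<in> E" "y \<in> E" by blast
    then show "a + b \<in> f1 ` E" using f1add subspace_add[OF E] by (metis image_eqI)
  next
    fix c a assume "a \<in> f1 ` E"
    then obtain x where "a = f1 x" "x \<in> E" by blast
    then show "c *\<^sub>R a \<in> f1 ` E" using f1scale subspace_mul[OF E] by (metis image_eqI)
  qed
  have D1sub: "add_subgroup (f2 ` D)"
    unfolding add_subgroup_def
  proof (intro conjI ballI)
    show "0 \<in> f2 ` D" using D0 f20 by (metis image_eqI)
  next
    fix a b assume "a \<in> f2 ` D" "b \<in> f2 ` D"
    then obtain x y where "a = f2 x" "b = f2 y" "x \<in> D" "y \<in> D" by blast
    then show "a + b \<in> f2 ` D" using f2add Dadd by (metis image_eqI)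
  next
    fix a assume "a \<in> f2 ` D"
    then obtain x where "a = f2 x" "x \<in> D" by blast
    then show "- a \<in> f2 ` D" using f2neg Dneg by (metis image_eqI)
  qed
  have D1disc: "discrete (f2 ` D)" using D'disc f2D by (rule discrete_subset)
  have int1: "f1 ` E \<inter> span (f2 ` D) = {0}"
  proof -
    have "span (f2 ` D) \<subseteq> span D'" using f2D by (rule span_mono)
    moreover have "0 \<in> f1 ` E" using E0 f10 by (metis image_eqI)
    ultimately have "f1 ` E \<inter> span (f2 ` D) \<subseteq> E' \<inter> span D'" using f1E by blast
    then have "f1 ` E \<inter> span (f2 ` D) \<subseteq> {0}" using int' by simp
    moreover have "0 \<in> f1 ` E \<inter> span (f2 ` D)" using \<open>0 \<in> f1 ` E\<close> span_zero by blast
    ultimately show ?thesis by blast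
  qed
  have part2: "closed_add_subgroup (f ` H)"
    unfolding imEq by (rule sum_closed_add_subgroup[OF E1sub D1sub D1disc int1])
  show ?thesis using part1 part2 by blast
qed

end
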